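(* For the operator $A\colon c_c\to c_c$, $(Ax)_1=x_1$, $(Ax)_n=x_n-x_{n-1}$ ($n>1$), the point $x=0$ minimizes $f\circ A$ over $c_c$, and $\min_{x\in c_c} f(Ax)=f(0)=\pi^2/12$. Moreover, the directional derivative of $f\circ A$ at $0$ vanishes in every direction $y\in c_c$.
   Context: Let $c_c$ be the space of finitely supported real sequences with the $\ell^2$-norm. Let $f\colon c_c\to\mathbb{R}$, $f(x)=\sum_{n=1}^\infty \frac{n^2}{2}(x_n-n^{-2})^2$. *)

theory Defs
  imports "HOL-Analysis.Analysis"
begin

text \<open>Sequences are 0-indexed: the paper's coordinate x_n (n \<ge> 1) is x (n - 1) here.\<close>

definition cc :: "(nat \<Rightarrow> real) set" where
  "cc = {x. finite {n. x n \<noteq> 0}}"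

definition f :: "(nat \<Rightarrow> real) \<Rightarrow> real" where
  "f x = (\<Sum>k. (real (k+1))^2 / 2 * (x k - 1 / (real (k+1))^2)^2)"

definition opA :: "(nat \<Rightarrow> real) \<Rightarrow> (nat \<Rightarrow> real)" where
  "opA x = (\<lambda>k. if k = 0 then x 0 else x k - x (k - 1))"

end

theory Submission
  imports Defs
begin

definition tm :: "(nat \<Rightarrow> real) \<Rightarrow> nat \<Rightarrow> real" where
  "tm x k = (real (k+1))^2 / 2 * (x k - 1 / (real (k+1))^2)^2"

lemma alg: "(a::real) \<noteq> 0 \<Longrightarrow> a^2/2 * (z - 1/a^2)^2 = a^2/2 * z^2 - z + 1/(2*a^2)"
  by (simp add: power2_eq_square field_simps)

lemma tm_exp: "tm x k = (real (k+1))^2/2 * (x k)^2 - x k + 1/(2*(real (k+1))^2)"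
  unfolding tm_def by (rule alg) simp

lemma tm0: "tm (\<lambda>_. 0) k = 1 / (2 * (real k + 1)^2)"
  by (simp add: tm_exp add.commute)

lemma f0_sums: "tm (\<lambda>_. 0) sums (pi^2/12)"
proof -
  have "(\<lambda>n. (1/2) * (1 / real ((n + 1)\<^sup>2))) sums ((1/2) * (pi\<^sup>2 / 6))"
    using inverse_squares_sums by (rule sums_mult)
  moreover have "tm (\<lambda>_. 0) = (\<lambda>n. (1/2) * (1 / real ((n + 1)\<^sup>2)))"
    by (rule ext) (simp add: tm0)
  ultimately show ?thesis by simp
qed

lemma f0: "f (\<lambda>_. 0) = pi^2/12"
proof -
  have "f (\<lambda>_. 0) = suminf (tm (\<lambda>_. 0))" unfolding f_def tm_def ..
  thus ?thesis using f0_sums by (simp add: sums_iff)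
qed

lemma tm_diff: "tm x k - tm (\<lambda>_. 0) k = (real (k+1))^2/2 * (x k)^2 - x k"
  by (simp add: tm_exp[of x k] tm_exp[of "\<lambda>_. 0" k])

lemma f_fin:
  assumes "\<forall>k\<ge>N. x k = 0"
  shows "f x = pi^2/12 + (\<Sum>k<N. (real (k+1))^2/2 * (x k)^2 - x k)"
proof -
  have s1: "(\<lambda>k. tm x k - tm (\<lambda>_. 0) k) sums (\<Sum>k<N. (real (k+1))^2/2 * (x k)^2 - x k)"
    unfolding tm_diff
    by (rule sums_finite) (use assms in auto)
  have "(\<lambda>k. (tm x k - tm (\<lambda>_. 0) k) + tm (\<lambda>_. 0) k) sums
        ((\<Sum>k<N. (real (k+1))^2/2 * (x k)^2 - x k) + pi^2/12)"
    by (rule sums_add[OF s1 f0_sums])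
  hence "tm x sums ((\<Sum>k<N. (real (k+1))^2/2 * (x k)^2 - x k) + pi^2/12)" by simp
  moreover have "f x = suminf (tm x)" unfolding f_def tm_def ..
  ultimately show ?thesis by (simp add: sums_iff)
qed

lemma cc_fin: "x \<in> cc \<Longrightarrow> \<exists>N. \<forall>k\<ge>N. x k = 0"
proof -
  assume "x \<in> cc"
  hence "finite {n. x n \<noteq> 0}" by (simp add: cc_def)
  then obtain N where "\<forall>n\<in>{n. x n \<noteq> 0}. n < N"
    using finite_nat_bounded by (metis lessThan_iff subsetD)
  thus ?thesis by (metis leD mem_Collect_eq)
qed

lemma tele: "(\<Sum>k<Suc n. opA x k) = x n"
  by (induction n) (auto simp: opA_def)

lemma fA:
  assumes "\<forall>k\<ge>N. x k = 0"
  shows "f (opA x) = pi^2/12 + (\<Sum>k<Suc N. (real (k+1))^2/2 * (opA x k)^2)"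
proof -
  have z: "\<forall>k\<ge>Suc N. opA x k = 0" using assms by (auto simp: opA_def)
  have "f (opA x) = pi^2/12 + (\<Sum>k<Suc N. (real (k+1))^2/2 * (opA x k)^2 - opA x k)"
    by (rule f_fin[OF z])
  also have "\<dots> = pi^2/12 + (\<Sum>k<Suc N. (real (k+1))^2/2 * (opA x k)^2) - (\<Sum>k<Suc N. opA x k)"
    by (simp add: sum_subtractf)
  also have "(\<Sum>k<Suc N. opA x k) = 0" using tele assms by simp
  finally show ?thesis by simp
qed

lemma opA0: "opA (\<lambda>_. 0) = (\<lambda>_. 0)" by (rule ext) (simp add: opA_def)

lemma lower: "x \<in> cc \<Longrightarrow> pi^2/12 \<le> f (opA x)"
proof -
  assume "x \<in> cc"
  then obtain N where "\<forall>k\<ge>N. x k = 0" using cc_fin by blast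
  from fA[OF this] show ?thesis by (simp add: sum_nonneg)
qed

theorem mainTheorem10:
  shows "(\<forall>x\<in>cc. f (opA (\<lambda>_. 0)) \<le> f (opA x))
       \<and> (INF x\<in>cc. f (opA x)) = f (\<lambda>_. 0)
       \<and> f (opA (\<lambda>_. 0)) = f (\<lambda>_. 0)
       \<and> f (\<lambda>_. 0) = pi^2 / 12
       \<and> (\<forall>y\<in>cc. ((\<lambda>t. (f (opA (\<lambda>n. t * y n)) - f (opA (\<lambda>_. 0))) / t) \<longlongrightarrow> 0) (at_right 0))"
proof (intro conjI ballI)
  fix x assume "x \<in> cc" thus "f (opA (\<lambda>_. 0)) \<le> f (opA x)" using lower by (simp add: opA0 f0)
next
  have c0: "(\<lambda>_. 0::real) \<in> cc" by (simp add: cc_def)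
  show "(INF x\<in>cc. f (opA x)) = f (\<lambda>_. 0)"
  proof (rule cInf_eq_minimum)
    show "f (\<lambda>_. 0) \<in> (\<lambda>x. f (opA x)) ` cc"
      using c0 by (rule rev_image_eqI) (simp add: opA0)
  qed (use lower in \<open>auto simp: f0\<close>)
next
  show "f (opA (\<lambda>_. 0)) = f (\<lambda>_. 0)" by (simp add: opA0)
next
  show "f (\<lambda>_. 0) = pi^2 / 12" by (rule f0)
next
  fix y assume "y \<in> cc"
  then obtain N where N: "\<forall>k\<ge>N. y k = 0" using cc_fin by blast
  define C where "C = (\<Sum>k<Suc N. (real (k+1))^2/2 * (opA y k)^2)"
  have eq: "(f (opA (\<lambda>n. t * y n)) - f (opA (\<lambda>_. 0))) / t = t * C" if "t > 0" for t
  proof -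
    have tz: "\<forall>k\<ge>N. t * y k = 0" using N by simp
    have oa: "opA (\<lambda>n. t * y n) = (\<lambda>k. t * opA y k)"
      by (rule ext) (simp add: opA_def right_diff_distrib)
    have "(\<Sum>k<Suc N. (real (k+1))^2/2 * (t * opA y k)^2) = t^2 * C"
      unfolding C_def sum_distrib_left by (rule sum.cong) (simp_all add: power_mult_distrib)
    with fA[OF tz, unfolded oa]
    have "f (opA (\<lambda>n. t * y n)) = pi^2/12 + t^2 * C" by (simp add: oa)
    thus ?thesis using that by (simp add: opA0 f0 power2_eq_square)
  qed
  have "((\<lambda>t. t * C) \<longlongrightarrow> 0 * C) (at_right 0)"
    by (intro tendsto_intros)
  hence "((\<lambda>t. t * C) \<longlongrightarrow> 0) (at_right 0)" by simp
  moreover have "eventually (\<lambda>t. t * C = (f (opA (\<lambda>n. t * y n)) - f (opA (\<lambda>_. 0))) / t) (at_right (0::real))"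
    using eventually_at_right_less[of "0::real"] by eventually_elim (simp add: eq)
  ultimately show "((\<lambda>t. (f (opA (\<lambda>n. t * y n)) - f (opA (\<lambda>_. 0))) / t) \<longlongrightarrow> 0) (at_right 0)"
    by (rule Lim_transform_eventually)
qed

end
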